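(* Let $(X,\tau)$ be a $\mathbb{B}$-topological space and $\theta\in\mathbb{B}^X$. Then $\theta$ is compact in $(X,\tau)$ if and only if $\theta[tt]$ is a compact subset of the topological space $(X,\tau[tt])$ and $\theta[ff]$ is a compact subset of the topological space $(X,\tau[ff])$.
   Context: $\mathbb{B}=\{0,1,tt,ff\}$ is the four-element Boolean algebra with bottom $0$, top $1$, and $tt,ff$ incomparable and complements of each other; $a\to b=\neg a\vee b$. $\mathbb{B}^X$ is the set of maps $X\to\mathbb{B}$ with pointwise order and operations; for $\lambda\in\mathbb{B}^X$ and $b\in\mathbb{B}$, $\lambda[b]=\{x\in X:\lambda(x)\ge b\}$. A $\mathbb{B}$-topology on $X$ is a subset $\tau\subseteq\mathbb{B}^X$ containing all constant maps and closed under arbitrary pointwise joins and finite pointwise meets; $\tau[tt]=\{\lambda[tt]:\lambda\in\tau\}$ and $\tau[ff]=\{\lambda[ff]:\lambda\in\tau\}$ are topologies on $X$. $\mathrm{sub}_X(\lambda,\mu)=\bigwedge_{x\in X}(\lambda(x)\to\mu(x))$. $\theta\in\mathbb{B}^X$ is compact if for every pointwise-directed family $\Lambda\subseteq\tau$, $\mathrm{sub}_X(\theta,\bigvee\Lambda)=\bigvee_{\lambda\in\Lambda}\mathrm{sub}_X(\theta,\lambda)$. *)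

theory Defs
  imports "HOL-Analysis.Analysis"
begin

datatype B4 = Bot | Top | TT | FF

fun bleq :: "B4 \<Rightarrow> B4 \<Rightarrow> bool" where
  "bleq Bot _ = True"
| "bleq _ Top = True"
| "bleq TT TT = True"
| "bleq FF FF = True"
| "bleq _ _ = False"

fun bneg :: "B4 \<Rightarrow> B4" where
  "bneg Bot = Top" | "bneg Top = Bot" | "bneg TT = FF" | "bneg FF = TT"

definition bSup :: "B4 set \<Rightarrow> B4" where
  "bSup S = (if Top \<in> S \<or> (TT \<in> S \<and> FF \<in> S) then Top
             else if TT \<in> S then TT else if FF \<in> S then FF else Bot)"

definition bInf :: "B4 set \<Rightarrow> B4" where
  "bInf S = (if Bot \<in> S \<or> (TT \<in> S \<and> FF \<in> S) then Bot
             else if TT \<in> S then TT else if FF \<in> S then FF else Top)"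

definition bjoin :: "B4 \<Rightarrow> B4 \<Rightarrow> B4" where "bjoin a b = bSup {a, b}"
definition bmeet :: "B4 \<Rightarrow> B4 \<Rightarrow> B4" where "bmeet a b = bInf {a, b}"
definition bimp :: "B4 \<Rightarrow> B4 \<Rightarrow> B4" where "bimp a b = bjoin (bneg a) b"

text \<open>Pointwise order, cuts, B-topologies on a carrier X (maps outside X are irrelevant;
  we consider maps X \<rightarrow> B as functions extensional to X, value Bot outside).\<close>
definition Bmaps :: "'a set \<Rightarrow> ('a \<Rightarrow> B4) set" where
  "Bmaps X = {f. \<forall>x. x \<notin> X \<longrightarrow> f x = Bot}"

definition pleq :: "'a set \<Rightarrow> ('a \<Rightarrow> B4) \<Rightarrow> ('a \<Rightarrow> B4) \<Rightarrow> bool" where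
  "pleq X f g \<longleftrightarrow> (\<forall>x\<in>X. bleq (f x) (g x))"

definition pSup :: "'a set \<Rightarrow> ('a \<Rightarrow> B4) set \<Rightarrow> ('a \<Rightarrow> B4)" where
  "pSup X F = (\<lambda>x. if x \<in> X then bSup ((\<lambda>f. f x) ` F) else Bot)"

definition pmeet :: "'a set \<Rightarrow> ('a \<Rightarrow> B4) \<Rightarrow> ('a \<Rightarrow> B4) \<Rightarrow> ('a \<Rightarrow> B4)" where
  "pmeet X f g = (\<lambda>x. if x \<in> X then bmeet (f x) (g x) else Bot)"

definition pconst :: "'a set \<Rightarrow> B4 \<Rightarrow> ('a \<Rightarrow> B4)" where
  "pconst X b = (\<lambda>x. if x \<in> X then b else Bot)"

definition cut :: "'a set \<Rightarrow> ('a \<Rightarrow> B4) \<Rightarrow> B4 \<Rightarrow> 'a set" where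
  "cut X f b = {x\<in>X. bleq b (f x)}"

definition is_Btopology :: "'a set \<Rightarrow> ('a \<Rightarrow> B4) set \<Rightarrow> bool" where
  "is_Btopology X \<tau> \<longleftrightarrow>
     \<tau> \<subseteq> Bmaps X \<and>
     (\<forall>b. pconst X b \<in> \<tau>) \<and>
     (\<forall>F. F \<subseteq> \<tau> \<longrightarrow> pSup X F \<in> \<tau>) \<and>
     (\<forall>f\<in>\<tau>. \<forall>g\<in>\<tau>. pmeet X f g \<in> \<tau>)"

definition cut_top :: "'a set \<Rightarrow> ('a \<Rightarrow> B4) set \<Rightarrow> B4 \<Rightarrow> 'a topology" where
  "cut_top X \<tau> b = topology (\<lambda>U. U \<in> (\<lambda>f. cut X f b) ` \<tau>)"

definition subX :: "'a set \<Rightarrow> ('a \<Rightarrow> B4) \<Rightarrow> ('a \<Rightarrow> B4) \<Rightarrow> B4" where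
  "subX X f g = bInf ((\<lambda>x. bimp (f x) (g x)) ` X)"

definition pdirected :: "'a set \<Rightarrow> ('a \<Rightarrow> B4) set \<Rightarrow> bool" where
  "pdirected X F \<longleftrightarrow> F \<noteq> {} \<and> (\<forall>f\<in>F. \<forall>g\<in>F. \<exists>h\<in>F. pleq X f h \<and> pleq X g h)"

definition Bcompact :: "'a set \<Rightarrow> ('a \<Rightarrow> B4) set \<Rightarrow> ('a \<Rightarrow> B4) \<Rightarrow> bool" where
  "Bcompact X \<tau> \<theta> \<longleftrightarrow>
     (\<forall>\<Lambda>. \<Lambda> \<subseteq> \<tau> \<and> pdirected X \<Lambda> \<longrightarrow>
        subX X \<theta> (pSup X \<Lambda>) = bSup ((\<lambda>l. subX X \<theta> l) ` \<Lambda>))"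

end

theory Submission
  imports Defs
begin

lemma bleqTT: "bleq TT s \<longleftrightarrow> s = TT \<or> s = Top" by (cases s) auto
lemma bleqFF: "bleq FF s \<longleftrightarrow> s = FF \<or> s = Top" by (cases s) auto

lemma bleq_bSup: "b \<in> {TT,FF} \<Longrightarrow> bleq b (bSup S) \<longleftrightarrow> (\<exists>s\<in>S. bleq b s)"
  unfolding bSup_def by (auto simp: bleqTT bleqFF)

lemma bleq_bInf: "b \<in> {TT,FF} \<Longrightarrow> bleq b (bInf S) \<longleftrightarrow> (\<forall>s\<in>S. bleq b s)"
  proof -
  have e: "\<And>s. s = Bot \<or> s = Top \<or> s = TT \<or> s = FF" by (case_tac s) auto
  show "b \<in> {TT,FF} \<Longrightarrow> ?thesis" unfolding bInf_def using e by (auto simp: bleqTT bleqFF) metis+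
qed

lemma bleq_bmeet: "b \<in> {TT,FF} \<Longrightarrow> bleq b (bmeet x y) \<longleftrightarrow> bleq b x \<and> bleq b y"
  unfolding bmeet_def by (simp add: bleq_bInf)

lemma bleq_bimp: "b \<in> {TT,FF} \<Longrightarrow> bleq b (bimp x y) \<longleftrightarrow> (bleq b x \<longrightarrow> bleq b y)"
  unfolding bimp_def bjoin_def by (simp add: bleq_bSup) (cases b; cases x; auto)

lemma B4_eq: "x = y \<longleftrightarrow> (bleq TT x \<longleftrightarrow> bleq TT y) \<and> (bleq FF x \<longleftrightarrow> bleq FF y)"
  by (cases x; cases y; auto)

lemma cut_pSup: "b \<in> {TT,FF} \<Longrightarrow> cut X (pSup X F) b = \<Union>((\<lambda>f. cut X f b) ` F)"
  unfolding cut_def pSup_def by (auto simp: bleq_bSup)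

lemma cut_pmeet: "b \<in> {TT,FF} \<Longrightarrow> cut X (pmeet X f g) b = cut X f b \<inter> cut X g b"
  unfolding cut_def pmeet_def by (auto simp: bleq_bmeet)

lemma subX_cut: "b \<in> {TT,FF} \<Longrightarrow> bleq b (subX X f g) \<longleftrightarrow> cut X f b \<subseteq> cut X g b"
  unfolding subX_def cut_def by (auto simp: bleq_bInf bleq_bimp)

lemma istop_cut:
  assumes T: "is_Btopology X \<tau>" and b: "b \<in> {TT,FF}"
  shows "istopology (\<lambda>U. U \<in> (\<lambda>f. cut X f b) ` \<tau>)"
  unfolding istopology_def
proof safe
  fix f g assume "f \<in> \<tau>" "g \<in> \<tau>"
  then have "pmeet X f g \<in> \<tau>" using T unfolding is_Btopology_def by blast
  then show "cut X f b \<inter> cut X g b \<in> (\<lambda>f. cut X f b) ` \<tau>"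
    using cut_pmeet[OF b] by (metis image_eqI)
next
  fix K assume K: "\<forall>U\<in>K. U \<in> (\<lambda>f. cut X f b) ` \<tau>"
  then obtain g where g: "\<And>U. U \<in> K \<Longrightarrow> g U \<in> \<tau> \<and> cut X (g U) b = U"
    by (metis imageE)
  have "g ` K \<subseteq> \<tau>" using g by auto
  then have "pSup X (g ` K) \<in> \<tau>" using T unfolding is_Btopology_def by blast
  moreover have "cut X (pSup X (g ` K)) b = \<Union>K"
  proof -
    have "(\<lambda>f. cut X f b) ` g ` K = K" using g by (force simp: image_image)
    then show ?thesis by (simp add: cut_pSup[OF b])
  qed
  ultimately show "\<Union>K \<in> (\<lambda>f. cut X f b) ` \<tau>" by (metis image_eqI)
qed

lemma openin_cut:
  assumes "is_Btopology X \<tau>" "b \<in> {TT,FF}"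
  shows "openin (cut_top X \<tau> b) U \<longleftrightarrow> U \<in> (\<lambda>f. cut X f b) ` \<tau>"
  unfolding cut_top_def using topology_inverse'[OF istop_cut[OF assms]] by simp

lemma bleq_iff: "bleq a c \<longleftrightarrow> (bleq TT a \<longrightarrow> bleq TT c) \<and> (bleq FF a \<longrightarrow> bleq FF c)"
  by (cases a; cases c) auto

lemma pSup_mono: "A \<subseteq> B \<Longrightarrow> pleq X (pSup X A) (pSup X B)"
  unfolding pleq_def pSup_def
  by (subst bleq_iff) (auto simp: bleq_bSup)

lemma pleq_trans: "pleq X f g \<Longrightarrow> pleq X g h \<Longrightarrow> pleq X f h"
  unfolding pleq_def by (metis bleq_iff)

lemma comp_iff:
  assumes T: "is_Btopology X \<tau>" and b: "b \<in> {TT,FF}"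
  shows "(\<forall>\<Lambda>. \<Lambda> \<subseteq> \<tau> \<and> pdirected X \<Lambda> \<longrightarrow>
            (bleq b (subX X \<theta> (pSup X \<Lambda>)) \<longleftrightarrow> bleq b (bSup ((\<lambda>l. subX X \<theta> l) ` \<Lambda>))))
         \<longleftrightarrow> compactin (cut_top X \<tau> b) (cut X \<theta> b)"
  (is "?L \<longleftrightarrow> ?R")
proof
  assume L: ?L
  have sub: "cut X \<theta> b \<subseteq> topspace (cut_top X \<tau> b)"
  proof -
    have "pconst X Top \<in> \<tau>" using T unfolding is_Btopology_def by (elim conjE) (rule spec)
    then have o: "openin (cut_top X \<tau> b) (cut X (pconst X Top) b)"
      unfolding openin_cut[OF T b] by (rule imageI)
    have e: "cut X (pconst X Top) b = X" using b unfolding cut_def pconst_def by auto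
    have "X \<subseteq> topspace (cut_top X \<tau> b)" using openin_subset[OF o] unfolding e .
    moreover have "cut X \<theta> b \<subseteq> X" unfolding cut_def by (rule Collect_restrict)
    ultimately show ?thesis by (rule order_trans[rotated])
  qed
  show ?R unfolding compactin_def
  proof (intro conjI sub allI impI)
    fix U assume U: "(\<forall>u\<in>U. openin (cut_top X \<tau> (b)) u) \<and> cut X \<theta> b \<subseteq> \<Union> U"
    then obtain g where g: "\<And>u. u \<in> U \<Longrightarrow> g u \<in> \<tau> \<and> cut X (g u) b = u"
      using openin_cut[OF T b] by (metis imageE)
    define \<Lambda> where "\<Lambda> = (\<lambda>F. pSup X (g ` F)) ` {F. finite F \<and> F \<subseteq> U}"
    have Lt: "\<Lambda> \<subseteq> \<tau>"
    proof
      fix l assume "l \<in> \<Lambda>"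
      then obtain F where F: "F \<subseteq> U" "l = pSup X (g ` F)" unfolding \<Lambda>_def by auto
      then have "g ` F \<subseteq> \<tau>" using g by auto
      then show "l \<in> \<tau>" using T F unfolding is_Btopology_def by blast
    qed
    have Ld: "pdirected X \<Lambda>" unfolding pdirected_def
    proof (intro conjI ballI)
      show "\<Lambda> \<noteq> {}" unfolding \<Lambda>_def by auto
    next
      fix f h assume "f \<in> \<Lambda>" "h \<in> \<Lambda>"
      then obtain F H where "finite F" "F \<subseteq> U" "f = pSup X (g ` F)"
        "finite H" "H \<subseteq> U" "h = pSup X (g ` H)" unfolding \<Lambda>_def by auto
      then show "\<exists>k\<in>\<Lambda>. pleq X f k \<and> pleq X h k"
        unfolding \<Lambda>_def
        by (intro bexI[of _ "pSup X (g ` (F \<union> H))"]) (auto intro!: pSup_mono)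
    qed
    have "cut X (pSup X \<Lambda>) b = \<Union>((\<lambda>f. cut X f b) ` \<Lambda>)" using cut_pSup[OF b] .
    also have "\<dots> \<supseteq> \<Union>U"
    proof
      fix x assume "x \<in> \<Union>U"
      then obtain u where u: "u \<in> U" "x \<in> u" by auto
      have "pSup X (g ` {u}) \<in> \<Lambda>" unfolding \<Lambda>_def using u by (intro image_eqI[of _ _ "{u}"]) auto
      moreover have "cut X (pSup X (g ` {u})) b = u" using g u by (simp add: cut_pSup[OF b])
      ultimately show "x \<in> \<Union>((\<lambda>f. cut X f b) ` \<Lambda>)" using u by blast
    qed
    finally have c: "\<Union>U \<subseteq> cut X (pSup X \<Lambda>) b" .
    have "bleq b (subX X \<theta> (pSup X \<Lambda>))" unfolding subX_cut[OF b] using U c by (meson order_trans)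
    moreover have "bleq b (subX X \<theta> (pSup X \<Lambda>)) \<longleftrightarrow> bleq b (bSup ((\<lambda>l. subX X \<theta> l) ` \<Lambda>))"
      using spec[OF L, of \<Lambda>] Lt Ld by (rule mp[OF _ conjI])
    ultimately have "bleq b (bSup ((\<lambda>l. subX X \<theta> l) ` \<Lambda>))" by simp
    then obtain l where l: "l \<in> \<Lambda>" "cut X \<theta> b \<subseteq> cut X l b"
      using \<open>bleq b (bSup ((\<lambda>l. subX X \<theta> l) ` \<Lambda>))\<close> by (auto simp add: bleq_bSup[OF b] subX_cut[OF b])
    then obtain F where F: "finite F" "F \<subseteq> U" "l = pSup X (g ` F)" unfolding \<Lambda>_def by auto
    have "(\<lambda>f. cut X f b) ` g ` F = F" using g F by (force simp: image_image)
    then have "cut X l b = \<Union>F" using F by (simp add: cut_pSup[OF b])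
    then show "\<exists>F. finite F \<and> F \<subseteq> U \<and> cut X \<theta> b \<subseteq> \<Union>F" using F l by auto
  qed
next
  assume R: ?R
  show ?L
  proof (intro allI impI)
    fix \<Lambda> assume A: "\<Lambda> \<subseteq> \<tau> \<and> pdirected X \<Lambda>"
    have cS: "cut X (pSup X \<Lambda>) b = \<Union>((\<lambda>f. cut X f b) ` \<Lambda>)" using cut_pSup[OF b] .
    have rhs: "bleq b (bSup ((\<lambda>l. subX X \<theta> l) ` \<Lambda>)) \<longleftrightarrow> (\<exists>l\<in>\<Lambda>. cut X \<theta> b \<subseteq> cut X l b)"
      by (simp add: bleq_bSup[OF b] subX_cut[OF b])
    have lhs: "bleq b (subX X \<theta> (pSup X \<Lambda>)) \<longleftrightarrow> cut X \<theta> b \<subseteq> \<Union>((\<lambda>f. cut X f b) ` \<Lambda>)"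
      by (simp add: subX_cut[OF b] cS)
    have mono: "\<And>f h. pleq X f h \<Longrightarrow> cut X f b \<subseteq> cut X h b"
      using b unfolding pleq_def cut_def by (auto; case_tac "f x"; case_tac "h x"; auto)
    have "cut X \<theta> b \<subseteq> \<Union>((\<lambda>f. cut X f b) ` \<Lambda>) \<Longrightarrow> \<exists>l\<in>\<Lambda>. cut X \<theta> b \<subseteq> cut X l b"
    proof -
      assume cov: "cut X \<theta> b \<subseteq> \<Union>((\<lambda>f. cut X f b) ` \<Lambda>)"
      have op: "\<forall>u\<in>(\<lambda>f. cut X f b) ` \<Lambda>. openin (cut_top X \<tau> b) u"
      proof
        fix u assume "u \<in> (\<lambda>f. cut X f b) ` \<Lambda>"
        then have "u \<in> (\<lambda>f. cut X f b) ` \<tau>" using A by blast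
        then show "openin (cut_top X \<tau> b) u" unfolding openin_cut[OF T b] .
      qed
      have R2: "\<forall>\<U>. (\<forall>U \<in> \<U>. openin (cut_top X \<tau> b) U) \<and> cut X \<theta> b \<subseteq> \<Union>\<U>
          \<longrightarrow> (\<exists>\<F>. finite \<F> \<and> \<F> \<subseteq> \<U> \<and> cut X \<theta> b \<subseteq> \<Union>\<F>)"
        using R unfolding compactin_def by (rule conjunct2)
      obtain F where F: "finite F" "F \<subseteq> (\<lambda>f. cut X f b) ` \<Lambda>" "cut X \<theta> b \<subseteq> \<Union>F"
        using mp[OF spec[OF R2, of "(\<lambda>f. cut X f b) ` \<Lambda>"] conjI[OF op cov]] by (elim exE conjE)
      then obtain G where G: "finite G" "G \<subseteq> \<Lambda>" "F = (\<lambda>f. cut X f b) ` G"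
        by (meson finite_subset_image)
      have ne: "\<Lambda> \<noteq> {}" and dir: "\<And>f g. f \<in> \<Lambda> \<Longrightarrow> g \<in> \<Lambda> \<Longrightarrow> \<exists>h\<in>\<Lambda>. pleq X f h \<and> pleq X g h"
        using A unfolding pdirected_def by auto
      have "\<exists>l\<in>\<Lambda>. \<forall>g\<in>G. pleq X g l" using G(1,2)
      proof (induction G rule: finite_induct)
        case empty then show ?case using ne by auto
      next
        case (insert x G)
        then obtain l where l: "l \<in> \<Lambda>" "\<forall>g\<in>G. pleq X g l" by auto
        have "x \<in> \<Lambda>" using insert.prems by simp
        then obtain k where k: "k \<in> \<Lambda>" "pleq X x k" "pleq X l k"
          using dir[OF _ l(1)] by blast
        have "\<forall>g\<in>G. pleq X g k" using l(2) k(3) pleq_trans by blast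
        then show ?case using k by auto
      qed
      then obtain l where l: "l \<in> \<Lambda>" "\<forall>g\<in>G. pleq X g l" by auto
      have "\<Union>F \<subseteq> cut X l b" unfolding G(3) using l(2) mono by auto
      then show ?thesis using F(3) l(1) by blast
    qed
    then show "bleq b (subX X \<theta> (pSup X \<Lambda>)) \<longleftrightarrow> bleq b (bSup ((\<lambda>l. subX X \<theta> l) ` \<Lambda>))"
      unfolding lhs rhs by blast
  qed
qed

theorem mainTheorem3:
  fixes X :: "'a set" and \<tau> :: "('a \<Rightarrow> B4) set" and \<theta> :: "'a \<Rightarrow> B4"
  assumes "is_Btopology X \<tau>" and "\<theta> \<in> Bmaps X"
  shows "Bcompact X \<tau> \<theta> \<longleftrightarrow>
           compactin (cut_top X \<tau> TT) (cut X \<theta> TT) \<and>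
           compactin (cut_top X \<tau> FF) (cut X \<theta> FF)"
  unfolding Bcompact_def comp_iff[OF assms(1), of TT, symmetric, simplified]
    comp_iff[OF assms(1), of FF, symmetric, simplified]
  by (subst B4_eq) blast

end
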